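(* In a public goods economy (as in the context), let $\mathbf{a}$ be an outcome with $\mathbf{0}<\mathbf{a}<\mathbf{1}$. Then $\mathbf{a}$ is Pareto efficient if and only if there exist directions $\mathbf{v}_{up}>\mathbf{0}$ and $\mathbf{v}_{down}<\mathbf{0}$ such that $\mathbf{d}_{\mathbf{v}_{up}}\mathbf{u}(\mathbf{a})\le\mathbf{0}$ and $\mathbf{d}_{\mathbf{v}_{down}}\mathbf{u}(\mathbf{a})\le\mathbf{0}$.
   Context: Agents $N=\{1,\dots,n\}$; outcomes are vectors in $[0,1]^n$. Vector orderings: $\mathbf{x}\ge\mathbf{y}$ (resp. $\le$) means $x_i\ge y_i$ (resp. $\le$) for all $i$; $\mathbf{x}>\mathbf{y}$ (resp. $<$) means strict inequality in every coordinate; $\mathbf{x}\gneq\mathbf{y}$ means $\mathbf{x}\ge\mathbf{y}$ and $x_j>y_j$ for some $j$. The utility function $\mathbf{u}:[0,1]^n\to[0,1]^n$ is continuous, concave, and has positive externalities: whenever $\mathbf{a}\gneq\mathbf{a}'$ and $a_i=a'_i$, then $u_i(\mathbf{a})>u_i(\mathbf{a}')$. $\mathbf{a}$ is Pareto efficient if there is no outcome $\mathbf{a}'$ with $\mathbf{u}(\mathbf{a}')\gneq\mathbf{u}(\mathbf{a})$. For $\mathbf{v}\in\mathbb{R}^n$, $\mathbf{d}_{\mathbf{v}}\mathbf{u}(\mathbf{a}):=\lim_{\lambda\to0^+}\frac{\mathbf{u}(\mathbf{a}+\lambda\mathbf{v})-\mathbf{u}(\mathbf{a})}{\lambda}$ is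 the one-sided directional derivative. *)

theory Defs
  imports "HOL-Analysis.Analysis"
begin

definition outcomes :: "(real ^ 'n) set" where
  "outcomes = {a. \<forall>i. 0 \<le> a $ i \<and> a $ i \<le> 1}"

definition vgneq :: "real ^ 'n \<Rightarrow> real ^ 'n \<Rightarrow> bool" where
  "vgneq x y \<longleftrightarrow> (\<forall>i. x $ i \<ge> y $ i) \<and> (\<exists>j. x $ j > y $ j)"

definition public_goods_utility :: "(real ^ 'n \<Rightarrow> real ^ 'n) \<Rightarrow> bool" where
  "public_goods_utility u \<longleftrightarrow>
     (\<forall>a \<in> outcomes. u a \<in> outcomes) \<and>
     continuous_on outcomes u \<and>
     (\<forall>i. concave_on outcomes (\<lambda>a. u a $ i)) \<and>
     (\<forall>a \<in> outcomes. \<forall>a' \<in> outcomes. \<forall>i.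
        vgneq a a' \<and> a $ i = a' $ i \<longrightarrow> u a $ i > u a' $ i)"

definition pareto_efficient :: "(real ^ 'n \<Rightarrow> real ^ 'n) \<Rightarrow> real ^ 'n \<Rightarrow> bool" where
  "pareto_efficient u a \<longleftrightarrow> \<not> (\<exists>a' \<in> outcomes. vgneq (u a') (u a))"

definition has_dir_deriv ::
  "(real ^ 'n \<Rightarrow> real ^ 'n) \<Rightarrow> real ^ 'n \<Rightarrow> real ^ 'n \<Rightarrow> real ^ 'n \<Rightarrow> bool" where
  "has_dir_deriv u a v D \<longleftrightarrow>
     ((\<lambda>t. (u (a + t *\<^sub>R v) - u a) /\<^sub>R t) \<longlongrightarrow> D) (at_right 0)"

end

theory Submission
  imports Defs
begin

definition dq :: "(real ^ 'n \<Rightarrow> real ^ 'n) \<Rightarrow> real ^ 'n \<Rightarrow> real ^ 'n \<Rightarrow> real \<Rightarrow> real ^ 'n" where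
  "dq u a x t = (u (a + t *\<^sub>R x) - u a) /\<^sub>R t"

lemma dq_nth: "dq u a x t $ i = (u (a + t *\<^sub>R x) $ i - u a $ i) / t"
  by (simp add: dq_def divide_inverse_commute)

definition stdsx :: "(real ^ 'n) set" where
  "stdsx = {v. (\<forall>i. 0 \<le> v $ i) \<and> sum (\<lambda>i. v $ i) UNIV = 1}"

lemma stdsx_compact: "compact (stdsx :: (real ^ 'n) set)"
proof -
  have c1: "closed {v::real^'n. \<forall>i. 0 \<le> v $ i}" by (rule closed_positive_orthant)
  have c2: "closed {v::real^'n. sum (\<lambda>i. v $ i) UNIV = 1}"
    by (rule closed_Collect_eq) (intro continuous_intros)+
  have eq: "(stdsx :: (real ^ 'n) set) = {v::real^'n. \<forall>i. 0 \<le> v $ i} \<inter> {v. sum (\<lambda>i. v $ i) UNIV = 1}"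
    unfolding stdsx_def by auto
  have cl: "closed (stdsx :: (real ^ 'n) set)" unfolding eq using c1 c2 by (rule closed_Int)
  have "bounded (stdsx :: (real ^ 'n) set)"
    unfolding bounded_iff
  proof (intro exI ballI)
    fix v :: "real ^ 'n" assume "v \<in> stdsx"
    then have "sum (\<lambda>i. \<bar>v $ i\<bar>) UNIV = 1" unfolding stdsx_def by simp
    then show "norm v \<le> 1" using norm_le_l1_cart[of v] by simp
  qed
  then show ?thesis using cl compact_eq_bounded_closed by blast
qed

lemma stdsx_convex: "convex (stdsx :: (real ^ 'n) set)"
  unfolding convex_def stdsx_def
  by (auto simp: sum.distrib sum_distrib_left[symmetric])

lemma stdsx_ne: "(stdsx :: (real ^ 'n) set) \<noteq> {}"
proof -
  have "axis undefined 1 \<in> (stdsx :: (real ^ 'n) set)"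
    unfolding stdsx_def axis_def by auto
  then show ?thesis by blast
qed

lemma stdsx_pos: "v \<in> stdsx \<Longrightarrow> \<exists>j. v $ j > 0"
proof (rule ccontr)
  assume v: "v \<in> stdsx" and "\<not> (\<exists>j. v $ j > 0)"
  then have "\<forall>j. v $ j = 0" unfolding stdsx_def by (auto simp: not_less order_antisym)
  then show False using v unfolding stdsx_def by simp
qed

lemma pf:
  fixes H :: "real ^ 'n \<Rightarrow> real ^ 'n"
  assumes cont: "continuous_on UNIV H"
    and bnd: "\<And>v i. v \<in> stdsx \<Longrightarrow> v $ i \<le> H v $ i + L * v $ i"
  shows "\<exists>v\<in>stdsx. \<exists>s. H v = s *\<^sub>R v"
proof -
  define sg where "sg v = sum (\<lambda>i. H v $ i + L * v $ i) UNIV" for v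
  define F where "F v = inverse (sg v) *\<^sub>R (H v + L *\<^sub>R v)" for v
  have sg1: "sg v \<ge> 1" if "v \<in> stdsx" for v
  proof -
    have "1 = sum (\<lambda>i. v $ i) UNIV" using that unfolding stdsx_def by simp
    also have "\<dots> \<le> sg v" unfolding sg_def by (rule sum_mono) (rule bnd[OF that])
    finally show ?thesis .
  qed
  have csg: "continuous_on stdsx sg" unfolding sg_def
    by (intro continuous_intros continuous_on_subset[OF cont]) auto
  have cF: "continuous_on stdsx F" unfolding F_def
    by (intro continuous_intros csg continuous_on_subset[OF cont]) (use sg1 in force)+
  have FS: "F \<in> stdsx \<rightarrow> stdsx"
  proof
    fix v :: "real ^ 'n" assume v: "v \<in> stdsx"
    have p: "inverse (sg v) > 0" using sg1[OF v] by simp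
    have "\<forall>i. 0 \<le> F v $ i"
      unfolding F_def using bnd[OF v] p v unfolding stdsx_def
      by (auto intro!: mult_nonneg_nonneg) (smt (verit))
    moreover have "sum (\<lambda>i. F v $ i) UNIV = inverse (sg v) * sg v"
      unfolding F_def sg_def by (simp add: sum_distrib_left)
    ultimately show "F v \<in> stdsx" unfolding stdsx_def using p by simp
  qed
  obtain v where v: "v \<in> stdsx" "F v = v"
    using brouwer[OF stdsx_compact stdsx_convex stdsx_ne cF FS] by blast
  have "sg v *\<^sub>R F v = H v + L *\<^sub>R v" unfolding F_def using sg1[OF v(1)] by simp
  then have "H v = (sg v - L) *\<^sub>R v" using v(2) by (simp add: algebra_simps)
  then show ?thesis using v(1) by blast
qed

lemma ex_max: "\<exists>i. \<forall>j. (f :: 'n::finite \<Rightarrow> real) j \<le> f i"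
proof -
  have "Max (range f) \<in> range f" by (rule Max_in) auto
  then obtain i where "f i = Max (range f)" by (metis imageE)
  moreover have "f j \<le> Max (range f)" for j by (rule Max_ge) auto
  ultimately show ?thesis by metis
qed

locale pg =
  fixes u :: "real ^ 'n \<Rightarrow> real ^ 'n" and a :: "real ^ 'n"
  assumes pgu: "public_goods_utility u"
    and int: "\<forall>i. 0 < a $ i \<and> a $ i < 1"
begin

lemma a_in: "a \<in> outcomes"
  using int by (auto simp: outcomes_def less_imp_le)

lemma u_in: "x \<in> outcomes \<Longrightarrow> 0 \<le> u x $ i \<and> u x $ i \<le> 1"
  using pgu unfolding public_goods_utility_def outcomes_def by blast

lemma conc:
  assumes "x \<in> outcomes" "y \<in> outcomes" "0 \<le> th" "th \<le> 1"
  shows "(1 - th) * u x $ i + th * u y $ i \<le> u ((1 - th) *\<^sub>R x + th *\<^sub>R y) $ i"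
proof -
  have "concave_on outcomes (\<lambda>a. u a $ i)" using pgu unfolding public_goods_utility_def by blast
  then have "- u ((1 - th) *\<^sub>R x + th *\<^sub>R y) $ i \<le> (1 - th) * (- u x $ i) + th * (- u y $ i)"
    unfolding concave_on_def convex_on_def using assms by auto
  then show ?thesis by simp
qed

lemma ext_strict:
  assumes "x \<in> outcomes" "y \<in> outcomes" "\<forall>j. y $ j \<le> x $ j" "y $ k < x $ k" "x $ i = y $ i"
  shows "u y $ i < u x $ i"
  using pgu assms unfolding public_goods_utility_def vgneq_def by blast

lemma ext_weak:
  assumes "x \<in> outcomes" "y \<in> outcomes" "\<forall>j. y $ j \<le> x $ j" "x $ i = y $ i"
  shows "u y $ i \<le> u x $ i"
proof (cases "x = y")
  case False
  then obtain k where "x $ k \<noteq> y $ k" by (metis vec_eq_iff)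
  then have "y $ k < x $ k" using assms(3) by (metis order_le_less)
  then show ?thesis using ext_strict[OF assms(1,2,3)] assms(4) by (simp add: less_imp_le)
qed simp

definition m :: real where "m = Min (range (\<lambda>i. min (a $ i) (1 - a $ i)))"

lemma m_pos: "m > 0"
  unfolding m_def using int by (subst Min_gr_iff) auto

lemma m_le0: "m \<le> min (a $ i) (1 - a $ i)"
  unfolding m_def by (rule Min_le) auto

lemma m_le: "m \<le> a $ i" "m \<le> 1 - a $ i"
  using m_le0[of i] by auto

lemma near_in: "norm w \<le> m \<Longrightarrow> a + w \<in> outcomes"
proof -
  assume "norm w \<le> m"
  then have "\<bar>w $ i\<bar> \<le> m" for i using component_le_norm_cart order_trans by blast
  then show ?thesis using m_le unfolding outcomes_def by (auto simp: abs_le_iff) (smt (verit))+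
qed

lemma line_in: "\<exists>T>0. \<forall>t. \<bar>t\<bar> \<le> T \<longrightarrow> a + t *\<^sub>R x \<in> outcomes"
proof -
  define T where "T = m / (norm x + 1)"
  have nx: "norm x + 1 > 0" by (smt (verit) norm_ge_zero)
  then have "T > 0" unfolding T_def using m_pos by simp
  moreover have "a + t *\<^sub>R x \<in> outcomes" if "\<bar>t\<bar> \<le> T" for t
  proof (rule near_in)
    have "norm (t *\<^sub>R x) = \<bar>t\<bar> * norm x" by simp
    also have "\<dots> \<le> T * (norm x + 1)" using that \<open>T > 0\<close>
      by (intro mult_mono) auto
    also have "\<dots> = m" unfolding T_def using nx by simp
    finally show "norm (t *\<^sub>R x) \<le> m" .
  qed
  ultimately show ?thesis by blast
qed

lemma ev_in: "eventually (\<lambda>t. a + t *\<^sub>R x \<in> outcomes) (at_right 0)"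
proof -
  obtain T where T: "T > 0" "\<And>t. \<bar>t\<bar> \<le> T \<Longrightarrow> a + t *\<^sub>R x \<in> outcomes" using line_in by blast
  show ?thesis using eventually_at_right_real[OF T(1)]
    by eventually_elim (use T in auto)
qed

lemma mono_dq:
  assumes "0 < s" "s \<le> t" "a + t *\<^sub>R x \<in> outcomes"
  shows "dq u a x t $ i \<le> dq u a x s $ i"
proof -
  define th where "th = s / t"
  have t0: "t > 0" using assms by simp
  have th: "0 \<le> th" "th \<le> 1" unfolding th_def using assms by auto
  have eq: "a + s *\<^sub>R x = (1 - th) *\<^sub>R a + th *\<^sub>R (a + t *\<^sub>R x)"
    unfolding th_def using t0 by (simp add: algebra_simps)
  have "(1 - th) * u a $ i + th * u (a + t *\<^sub>R x) $ i \<le> u (a + s *\<^sub>R x) $ i"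
    using conc[OF a_in assms(3) th, of i] eq by simp
  then have "th * (u (a + t *\<^sub>R x) $ i - u a $ i) \<le> u (a + s *\<^sub>R x) $ i - u a $ i"
    by (simp add: algebra_simps)
  then have "s * ((u (a + t *\<^sub>R x) $ i - u a $ i) / t) \<le> u (a + s *\<^sub>R x) $ i - u a $ i"
    unfolding th_def by (simp add: field_simps)
  then show ?thesis unfolding dq_nth using assms(1) by (simp add: field_simps)
qed

lemma upper_dq:
  assumes "0 < s" "0 < t" "a - s *\<^sub>R x \<in> outcomes" "a + t *\<^sub>R x \<in> outcomes"
  shows "dq u a x t $ i \<le> (u a $ i - u (a - s *\<^sub>R x) $ i) / s"
proof -
  define th where "th = s / (s + t)"
  have th: "0 \<le> th" "th \<le> 1" unfolding th_def using assms by auto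
  have h1: "(s+t)*(1-th) = t" and h2: "(s+t)*th = s" unfolding th_def using assms(1,2) by (simp_all add: field_simps)
  have eq: "a = (1 - th) *\<^sub>R (a - s *\<^sub>R x) + th *\<^sub>R (a + t *\<^sub>R x)"
  proof -
    have "(s + t) *\<^sub>R ((1 - th) *\<^sub>R (a - s *\<^sub>R x) + th *\<^sub>R (a + t *\<^sub>R x))
       = ((s+t)*(1-th)) *\<^sub>R (a - s *\<^sub>R x) + ((s+t)*th) *\<^sub>R (a + t *\<^sub>R x)"
      by (simp add: scaleR_add_right)
    also have "\<dots> = t *\<^sub>R (a - s *\<^sub>R x) + s *\<^sub>R (a + t *\<^sub>R x)" using h1 h2 by simp
    also have "\<dots> = (s + t) *\<^sub>R a" by (simp add: algebra_simps)
    finally have "(s + t) *\<^sub>R ((1 - th) *\<^sub>R (a - s *\<^sub>R x) + th *\<^sub>R (a + t *\<^sub>R x)) = (s + t) *\<^sub>R a" .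
    then show ?thesis using assms(1,2) by (metis add_pos_pos less_irrefl scaleR_cancel_left)
  qed
  have "(1 - th) * u (a - s *\<^sub>R x) $ i + th * u (a + t *\<^sub>R x) $ i \<le> u a $ i"
    using conc[OF assms(3) assms(4) th, of i] eq by simp
  then have "(s+t) * ((1 - th) * u (a - s *\<^sub>R x) $ i + th * u (a + t *\<^sub>R x) $ i) \<le> (s+t) * u a $ i"
    using assms(1,2) by (intro mult_left_mono) auto
  also have "(s+t) * ((1 - th) * u (a - s *\<^sub>R x) $ i + th * u (a + t *\<^sub>R x) $ i)
     = ((s+t)*(1 - th)) * u (a - s *\<^sub>R x) $ i + ((s+t)*th) * u (a + t *\<^sub>R x) $ i"
    by (simp add: algebra_simps)
  finally have "t * u (a - s *\<^sub>R x) $ i + s * u (a + t *\<^sub>R x) $ i \<le> (s + t) * u a $ i"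
    unfolding h1 h2 .
  then have "s * (u (a + t *\<^sub>R x) $ i - u a $ i) \<le> t * (u a $ i - u (a - s *\<^sub>R x) $ i)"
    by (simp add: algebra_simps)
  then show ?thesis unfolding dq_nth using assms(1,2) by (simp add: field_simps)
qed

lemma dd_exists: "\<exists>D. has_dir_deriv u a x D"
proof -
  obtain T where T: "T > 0" "\<And>t. \<bar>t\<bar> \<le> T \<Longrightarrow> a + t *\<^sub>R x \<in> outcomes" using line_in by blast
  have lim: "((\<lambda>t. dq u a x t $ i) \<longlongrightarrow> - Inf ((\<lambda>t. - dq u a x t $ i) ` ({0<..} \<inter> {..T}))) (at_right 0)" for i
  proof -
    have "((\<lambda>t. - dq u a x t $ i) \<longlongrightarrow> Inf ((\<lambda>t. - dq u a x t $ i) ` ({0<..} \<inter> {..T})))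
        (at 0 within ({0<..} \<inter> {..T}))"
    proof (rule Lim_right_bound[where K = "- ((u a $ i - u (a - T *\<^sub>R x) $ i) / T)"])
      fix p q :: real assume "p \<in> {..T}" "q \<in> {..T}" "0 < p" "p \<le> q"
      then show "- dq u a x p $ i \<le> - dq u a x q $ i"
        using mono_dq[of p q x i] T by simp
    next
      fix p :: real assume "p \<in> {..T}" "0 < p"
      then show "- ((u a $ i - u (a - T *\<^sub>R x) $ i) / T) \<le> - dq u a x p $ i"
        using upper_dq[of T p x i] T(1) T(2)[of "-T"] T(2)[of p] by simp
    qed
    moreover have "at (0::real) within ({0<..} \<inter> {..T}) = at_right 0"
      by (rule at_within_nhd[where S="{..<T}"]) (use T in auto)
    ultimately have "((\<lambda>t. - dq u a x t $ i) \<longlongrightarrow> Inf ((\<lambda>t. - dq u a x t $ i) ` ({0<..} \<inter> {..T}))) (at_right 0)" by simp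
    from tendsto_minus[OF this] show ?thesis by simp
  qed
  show ?thesis unfolding has_dir_deriv_def
    by (rule exI[where x="\<chi> i. - Inf ((\<lambda>t. - dq u a x t $ i) ` ({0<..} \<inter> {..T}))"],
        rule vec_tendstoI) (use lim in \<open>simp add: dq_def[symmetric]\<close>)
qed

lemma dd_unique: "has_dir_deriv u a x D1 \<Longrightarrow> has_dir_deriv u a x D2 \<Longrightarrow> D1 = D2"
  unfolding has_dir_deriv_def using tendsto_unique[OF trivial_limit_at_right_real] by blast

lemma dd_zero: "has_dir_deriv u a 0 0"
  unfolding has_dir_deriv_def by simp

lemma dd_hom:
  assumes c: "c > 0" and D: "has_dir_deriv u a x D"
  shows "has_dir_deriv u a (c *\<^sub>R x) (c *\<^sub>R D)"
proof -
  have fl: "filterlim (\<lambda>t. c * t) (at_right 0) (at_right (0::real))"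
    unfolding filterlim_at
  proof
    show "\<forall>\<^sub>F t in at_right 0. c * t \<in> {0<..} \<and> c * t \<noteq> 0"
      using eventually_at_right_less[of 0] by eventually_elim (use c in auto)
    show "((\<lambda>t. c * t) \<longlongrightarrow> 0) (at_right 0)"
      by (rule tendsto_mult_right_zero) (rule tendsto_ident_at)
  qed
  have "((\<lambda>t. dq u a x (c * t)) \<longlongrightarrow> D) (at_right 0)"
    using filterlim_compose[OF D[unfolded has_dir_deriv_def dq_def[symmetric]] fl] by simp
  then have "((\<lambda>t. c *\<^sub>R dq u a x (c * t)) \<longlongrightarrow> c *\<^sub>R D) (at_right 0)"
    by (intro tendsto_scaleR tendsto_const)
  moreover have "c *\<^sub>R dq u a x (c * t) = dq u a (c *\<^sub>R x) t" for t
  proof (cases "t = 0")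
    case False
    have "c *\<^sub>R ((u (a + (c * t) *\<^sub>R x) - u a) /\<^sub>R (c * t)) = (c * inverse (c * t)) *\<^sub>R (u (a + (c * t) *\<^sub>R x) - u a)"
      by simp
    also have "c * inverse (c * t) = inverse t" using c False by (simp add: field_simps)
    finally show ?thesis unfolding dq_def by (simp add: algebra_simps)
  qed (simp add: dq_def)
  ultimately show ?thesis unfolding has_dir_deriv_def dq_def[symmetric] by simp
qed

lemma dd_conc:
  assumes th: "0 \<le> th" "th \<le> 1"
    and Dx: "has_dir_deriv u a x Dx" and Dy: "has_dir_deriv u a y Dy"
    and Dz: "has_dir_deriv u a (th *\<^sub>R x + (1 - th) *\<^sub>R y) Dz"
  shows "th * Dx $ i + (1 - th) * Dy $ i \<le> Dz $ i"
proof (rule tendsto_le[OF trivial_limit_at_right_real])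
  show "((\<lambda>t. dq u a (th *\<^sub>R x + (1 - th) *\<^sub>R y) t $ i) \<longlongrightarrow> Dz $ i) (at_right 0)"
    using Dz unfolding has_dir_deriv_def dq_def[symmetric] by (rule tendsto_vec_nth)
  show "((\<lambda>t. th * dq u a x t $ i + (1 - th) * dq u a y t $ i) \<longlongrightarrow> th * Dx $ i + (1 - th) * Dy $ i) (at_right 0)"
    using Dx Dy unfolding has_dir_deriv_def dq_def[symmetric]
    by (intro tendsto_intros)
  show "\<forall>\<^sub>F t in at_right 0. th * dq u a x t $ i + (1 - th) * dq u a y t $ i \<le> dq u a (th *\<^sub>R x + (1 - th) *\<^sub>R y) t $ i"
    using ev_in[of x] ev_in[of y] eventually_at_right_less[of 0]
  proof eventually_elim
    case (elim t)
    have eq: "a + t *\<^sub>R (th *\<^sub>R x + (1 - th) *\<^sub>R y) = (1 - (1 - th)) *\<^sub>R (a + t *\<^sub>R x) + (1 - th) *\<^sub>R (a + t *\<^sub>R y)"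
      by (simp add: algebra_simps)
    have "(1 - (1 - th)) * u (a + t *\<^sub>R x) $ i + (1 - th) * u (a + t *\<^sub>R y) $ i \<le> u (a + t *\<^sub>R (th *\<^sub>R x + (1 - th) *\<^sub>R y)) $ i"
      unfolding eq by (rule conc) (use elim th in auto)
    then have "th * (u (a + t *\<^sub>R x) $ i - u a $ i) + (1 - th) * (u (a + t *\<^sub>R y) $ i - u a $ i)
       \<le> u (a + t *\<^sub>R (th *\<^sub>R x + (1 - th) *\<^sub>R y)) $ i - u a $ i"
      by (simp add: algebra_simps)
    then have "(th * (u (a + t *\<^sub>R x) $ i - u a $ i) + (1 - th) * (u (a + t *\<^sub>R y) $ i - u a $ i)) / t
       \<le> (u (a + t *\<^sub>R (th *\<^sub>R x + (1 - th) *\<^sub>R y)) $ i - u a $ i) / t"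
      using elim by (intro divide_right_mono) auto
    then show ?case unfolding dq_nth by (simp add: add_divide_distrib)
  qed
qed

lemma dd_superadd:
  assumes Dx: "has_dir_deriv u a x Dx" and Dy: "has_dir_deriv u a y Dy"
    and Dz: "has_dir_deriv u a (x + y) Dz"
  shows "Dx $ i + Dy $ i \<le> Dz $ i"
proof -
  have H0: "has_dir_deriv u a ((1/2) *\<^sub>R (x + y)) ((1/2) *\<^sub>R Dz)" by (rule dd_hom) (use Dz in auto)
  have "(1/2::real) *\<^sub>R (x + y) = (1/2) *\<^sub>R x + (1 - 1/2) *\<^sub>R y" by (simp add: algebra_simps)
  with H0 have H: "has_dir_deriv u a ((1/2) *\<^sub>R x + (1 - 1/2) *\<^sub>R y) ((1/2) *\<^sub>R Dz)" by simp
  have "(1/2) * Dx $ i + (1 - 1/2) * Dy $ i \<le> ((1/2) *\<^sub>R Dz) $ i"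
    by (rule dd_conc[OF _ _ Dx Dy H]) auto
  then show ?thesis by simp
qed

lemma dd_pos:
  assumes x: "\<forall>j. 0 \<le> x $ j" "x $ k = 0" "0 < x $ j" and D: "has_dir_deriv u a x D"
  shows "D $ k > 0"
proof -
  obtain T where T: "T > 0" "\<And>t. \<bar>t\<bar> \<le> T \<Longrightarrow> a + t *\<^sub>R x \<in> outcomes" using line_in by blast
  have "u a $ k < u (a + T *\<^sub>R x) $ k"
    by (rule ext_strict[where k=j]) (use T x a_in in auto)
  then have pos: "dq u a x T $ k > 0" unfolding dq_nth using T by simp
  have "dq u a x T $ k \<le> D $ k"
  proof (rule tendsto_lowerbound[OF _ _ trivial_limit_at_right_real])
    show "((\<lambda>t. dq u a x t $ k) \<longlongrightarrow> D $ k) (at_right 0)"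
      using D unfolding has_dir_deriv_def dq_def[symmetric] by (rule tendsto_vec_nth)
    show "\<forall>\<^sub>F t in at_right 0. dq u a x T $ k \<le> dq u a x t $ k"
      using eventually_at_right_real[OF T(1)] by eventually_elim (rule mono_dq, use T in auto)
  qed
  then show ?thesis using pos by simp
qed

lemma dd_neg:
  assumes x: "\<forall>j. x $ j \<le> 0" "x $ k = 0" "x $ j < 0" and D: "has_dir_deriv u a x D"
  shows "D $ k < 0"
proof -
  obtain T where T: "T > 0" "\<And>t. \<bar>t\<bar> \<le> T \<Longrightarrow> a + t *\<^sub>R x \<in> outcomes" using line_in by blast
  have inT: "a - T *\<^sub>R x \<in> outcomes" using T(2)[of "-T"] T(1) by simp
  have "u a $ k < u (a - T *\<^sub>R x) $ k"
    by (rule ext_strict[where k=j]) (use T x a_in inT in \<open>auto simp: mult_pos_neg mult_nonneg_nonpos less_imp_le\<close>)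
  then have neg: "(u a $ k - u (a - T *\<^sub>R x) $ k) / T < 0" using T by (simp add: divide_neg_pos)
  have "D $ k \<le> (u a $ k - u (a - T *\<^sub>R x) $ k) / T"
  proof (rule tendsto_upperbound[OF _ _ trivial_limit_at_right_real])
    show "((\<lambda>t. dq u a x t $ k) \<longlongrightarrow> D $ k) (at_right 0)"
      using D unfolding has_dir_deriv_def dq_def[symmetric] by (rule tendsto_vec_nth)
    show "\<forall>\<^sub>F t in at_right 0. dq u a x t $ k \<le> (u a $ k - u (a - T *\<^sub>R x) $ k) / T"
      using eventually_at_right_real[OF T(1)] by eventually_elim (rule upper_dq, use T inT in auto)
  qed
  then show ?thesis using neg by simp
qed

lemma dd_ge:
  assumes w: "a + w \<in> outcomes" and D: "has_dir_deriv u a w D"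
  shows "u (a + w) $ i - u a $ i \<le> D $ i"
proof (rule tendsto_lowerbound[OF _ _ trivial_limit_at_right_real])
  show "((\<lambda>t. dq u a w t $ i) \<longlongrightarrow> D $ i) (at_right 0)"
    using D unfolding has_dir_deriv_def dq_def[symmetric] by (rule tendsto_vec_nth)
  show "\<forall>\<^sub>F t in at_right 0. u (a + w) $ i - u a $ i \<le> dq u a w t $ i"
    using eventually_at_right_real[OF zero_less_one]
  proof eventually_elim
    case (elim t)
    have eq: "a + t *\<^sub>R w = (1 - t) *\<^sub>R a + t *\<^sub>R (a + w)" by (simp add: algebra_simps)
    have "(1 - t) * u a $ i + t * u (a + w) $ i \<le> u (a + t *\<^sub>R w) $ i"
      unfolding eq by (rule conc) (use elim a_in w in auto)
    then have "t * (u (a + w) $ i - u a $ i) \<le> u (a + t *\<^sub>R w) $ i - u a $ i" by (simp add: algebra_simps)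
    then show ?case unfolding dq_nth using elim by (simp add: field_simps)
  qed
qed

lemma dd_hom0:
  assumes c: "c \<ge> 0" and D: "has_dir_deriv u a x D"
  shows "has_dir_deriv u a (c *\<^sub>R x) (c *\<^sub>R D)"
proof (cases "c = 0")
  case True then show ?thesis using dd_zero by simp
next
  case False then show ?thesis using dd_hom[OF _ D] c by simp
qed

lemma dd_nonneg:
  assumes w: "\<forall>j. 0 \<le> w $ j" "w $ k = 0" and D: "has_dir_deriv u a w D"
  shows "D $ k \<ge> 0"
proof (cases "\<exists>j. w $ j > 0")
  case True then show ?thesis using dd_pos[OF w(1,2) _ D] by (meson less_imp_le)
next
  case False
  then have "w = 0" using w by (metis order_antisym not_less vec_eq_iff zero_index)
  then have "D = 0" using dd_unique[OF D] dd_zero by simp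
  then show ?thesis by simp
qed

lemma suff_aux:
  assumes a': "a' \<in> outcomes" "vgneq (u a') (u a)"
    and c: "c \<ge> 0" and Dv: "has_dir_deriv u a v Dv" "\<forall>j. Dv $ j \<le> 0"
    and z: "\<forall>j. 0 \<le> (c *\<^sub>R v - (a' - a)) $ j" "(c *\<^sub>R v - (a' - a)) $ k = 0"
  shows False
proof -
  define w where "w = a' - a"
  define z where "z = c *\<^sub>R v - w"
  obtain Dw where Dw: "has_dir_deriv u a w Dw" using dd_exists by blast
  obtain Dz where Dz: "has_dir_deriv u a z Dz" using dd_exists by blast
  have Dcv: "has_dir_deriv u a (w + z) (c *\<^sub>R Dv)" using dd_hom0[OF c Dv(1)] unfolding z_def by simp
  have sa: "Dw $ j + Dz $ j \<le> c * Dv $ j" for j using dd_superadd[OF Dw Dz Dcv, of j] by simp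
  have cD: "c * Dv $ j \<le> 0" for j using c Dv(2) by (simp add: mult_nonneg_nonpos)
  have aw: "a + w = a'" unfolding w_def by simp
  have gw: "u a' $ j - u a $ j \<le> Dw $ j" for j using dd_ge[of w Dw j] Dw a' aw by simp
  have z': "\<forall>j. 0 \<le> z $ j" "z $ k = 0" using z unfolding z_def w_def by auto
  show False
  proof (cases "\<exists>j. z $ j > 0")
    case True
    then obtain j where "z $ j > 0" by blast
    then have "Dz $ k > 0" using dd_pos[OF z'(1,2) _ Dz] by blast
    moreover have "Dw $ k \<ge> 0" using gw[of k] a'(2) unfolding vgneq_def by (smt (verit))
    ultimately show False using sa[of k] cD[of k] by simp
  next
    case False
    then have "z = 0" using z' by (metis order_antisym not_less vec_eq_iff zero_index)
    then have "Dz = 0" using dd_unique[OF Dz] dd_zero by simp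
    obtain j where "u a' $ j > u a $ j" using a'(2) unfolding vgneq_def by blast
    then show False using gw[of j] sa[of j] cD[of j] \<open>Dz = 0\<close> by simp
  qed
qed

lemma sufficiency:
  assumes up: "\<forall>i. v_up $ i > 0" "has_dir_deriv u a v_up D_up" "\<forall>i. D_up $ i \<le> 0"
    and down: "\<forall>i. v_down $ i < 0" "has_dir_deriv u a v_down D_down" "\<forall>i. D_down $ i \<le> 0"
  shows "pareto_efficient u a"
  unfolding pareto_efficient_def
proof
  assume "\<exists>a'\<in>outcomes. vgneq (u a') (u a)"
  then obtain a' where a': "a' \<in> outcomes" "vgneq (u a') (u a)" by blast
  define w where "w = a' - a"
  show False
  proof (cases "\<exists>j. w $ j > 0")
    case True
    then obtain j0 where j0: "w $ j0 > 0" by blast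
    obtain i where i: "\<forall>j. w $ j / v_up $ j \<le> w $ i / v_up $ i"
      using ex_max[of "\<lambda>j. w $ j / v_up $ j"] by blast
    define c where "c = w $ i / v_up $ i"
    have "0 < w $ j0 / v_up $ j0" using j0 up(1) by simp
    then have c0: "c \<ge> 0" using i unfolding c_def by (smt (verit))
    have "0 \<le> (c *\<^sub>R v_up - (a' - a)) $ j" for j
    proof -
      have "w $ j / v_up $ j \<le> c" using i unfolding c_def by blast
      then have "w $ j \<le> c * v_up $ j" using up(1) by (simp add: divide_le_eq)
      then show ?thesis unfolding w_def by simp
    qed
    moreover have "(c *\<^sub>R v_up - (a' - a)) $ i = 0"
      unfolding c_def w_def using up(1)[rule_format, of i] by simp
    ultimately show False using suff_aux[OF a' c0 up(2,3)] by blast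
  next
    case False
    obtain i where i: "\<forall>j. - (w $ j / v_down $ j) \<le> - (w $ i / v_down $ i)"
      using ex_max[of "\<lambda>j. - (w $ j / v_down $ j)"] by blast
    define c where "c = w $ i / v_down $ i"
    have c0: "c \<ge> 0" unfolding c_def using False down(1)[rule_format, of i]
      by (simp add: divide_nonpos_neg not_less)
    have "0 \<le> (c *\<^sub>R v_down - (a' - a)) $ j" for j
    proof -
      have "c \<le> w $ j / v_down $ j" using i unfolding c_def by (smt (verit))
      then have "w $ j \<le> c * v_down $ j" using down(1)[rule_format, of j] by (simp add: le_divide_eq)
      then show ?thesis unfolding w_def by simp
    qed
    moreover have "(c *\<^sub>R v_down - (a' - a)) $ i = 0"
      unfolding c_def w_def using down(1)[rule_format, of i] by simp
    ultimately show False using suff_aux[OF a' c0 down(2,3)] by blast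
  qed
qed

definition DD :: "real ^ 'n \<Rightarrow> real ^ 'n" where "DD x = (SOME D. has_dir_deriv u a x D)"

lemma hD: "has_dir_deriv u a x (DD x)"
  unfolding DD_def using dd_exists by (rule someI_ex)

lemma DD_cont: "continuous_on UNIV DD"
proof -
  have c0: "continuous_on UNIV (\<lambda>x. - DD x $ i)" for i
  proof (rule convex_on_continuous[OF open_UNIV])
    show "convex_on UNIV (\<lambda>x. - DD x $ i)"
      unfolding convex_on_def
    proof (intro conjI convex_UNIV ballI allI impI)
      fix x y :: "real ^ 'n" and p q :: real
      assume "0 \<le> p" "0 \<le> q" "p + q = 1"
      then have q: "q = 1 - p" "p \<le> 1" by auto
      have "p * DD x $ i + (1 - p) * DD y $ i \<le> DD (p *\<^sub>R x + (1 - p) *\<^sub>R y) $ i"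
        by (rule dd_conc[OF _ _ hD hD hD]) (use \<open>0 \<le> p\<close> q in auto)
      then show "- DD (p *\<^sub>R x + q *\<^sub>R y) $ i \<le> p * - DD x $ i + q * - DD y $ i"
        unfolding q by simp
    qed
  qed
  have c1: "continuous_on UNIV (\<lambda>x. DD x $ i)" for i using continuous_on_minus[OF c0[of i]] by simp
  have "continuous_on UNIV (\<lambda>x. \<chi> i. DD x $ i)" by (rule continuous_on_vec_lambda) (rule c1)
  then show ?thesis by simp
qed

lemma noPos:
  assumes pe: "pareto_efficient u a" and D: "has_dir_deriv u a x D"
  shows "\<not> (\<forall>i. D $ i > 0)"
proof
  assume pos: "\<forall>i. D $ i > 0"
  have "\<forall>\<^sub>F t in at_right 0. \<forall>i. dq u a x t $ i > 0"
  proof (rule eventually_all_finite)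
    fix i
    show "\<forall>\<^sub>F t in at_right 0. dq u a x t $ i > 0"
      using D unfolding has_dir_deriv_def dq_def[symmetric]
      by (rule order_tendstoD(1)[OF tendsto_vec_nth]) (use pos in auto)
  qed
  then have "\<forall>\<^sub>F t in at_right 0. (\<forall>i. dq u a x t $ i > 0) \<and> a + t *\<^sub>R x \<in> outcomes \<and> t > 0"
    using ev_in[of x] eventually_at_right_less[of 0] by eventually_elim auto
  then obtain t where t: "\<forall>i. dq u a x t $ i > 0" "a + t *\<^sub>R x \<in> outcomes" "t > 0"
    using eventually_happens'[OF trivial_limit_at_right_real] by blast
  have "u a $ i < u (a + t *\<^sub>R x) $ i" for i
    using t(1)[rule_format, of i] t(3) unfolding dq_nth by (simp add: zero_less_divide_iff)
  then have "vgneq (u (a + t *\<^sub>R x)) (u a)" unfolding vgneq_def by (auto intro: less_imp_le)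
  then show False using pe t(2) unfolding pareto_efficient_def by blast
qed

definition L0 :: real where "L0 = sum (\<lambda>i. \<bar>DD (axis i 1) $ i\<bar>) UNIV"

lemma DD_lower:
  assumes v: "\<forall>j. 0 \<le> v $ j"
  shows "- L0 * v $ i \<le> DD v $ i"
proof -
  define e where "e = axis i (1::real)"
  define w where "w = v - (v $ i) *\<^sub>R e"
  have w: "\<forall>j. 0 \<le> w $ j" "w $ i = 0" unfolding w_def e_def axis_def using v by auto
  have h: "has_dir_deriv u a ((v $ i) *\<^sub>R e) ((v $ i) *\<^sub>R DD e)" by (rule dd_hom0[OF _ hD]) (use v in auto)
  have "v $ i * DD e $ i + DD w $ i \<le> DD v $ i"
    using dd_superadd[OF h hD[of w] hD[of "(v $ i) *\<^sub>R e + w"], of i] unfolding w_def by simp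
  moreover have "DD w $ i \<ge> 0" by (rule dd_nonneg[OF w hD])
  moreover have "\<bar>DD e $ i\<bar> \<le> L0" unfolding L0_def e_def
    by (rule member_le_sum) simp_all
  moreover have "- (v $ i * \<bar>DD e $ i\<bar>) \<le> v $ i * DD e $ i"
  proof -
    have "- \<bar>DD e $ i\<bar> \<le> DD e $ i" by linarith
    then have "v $ i * (- \<bar>DD e $ i\<bar>) \<le> v $ i * DD e $ i" using v by (intro mult_left_mono) auto
    then show ?thesis by simp
  qed
  moreover have "v $ i * \<bar>DD e $ i\<bar> \<le> v $ i * L0" using v calculation(3) by (simp add: mult_left_mono)
  moreover have "L0 * v $ i = v $ i * L0" by simp
  ultimately show ?thesis by linarith
qed

lemma necessity:
  assumes pe: "pareto_efficient u a"
  shows "\<exists>v_up v_down D_up D_down.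
        (\<forall>i. v_up $ i > 0) \<and> (\<forall>i. v_down $ i < 0) \<and>
        has_dir_deriv u a v_up D_up \<and> (\<forall>i. D_up $ i \<le> 0) \<and>
        has_dir_deriv u a v_down D_down \<and> (\<forall>i. D_down $ i \<le> 0)"
proof -
  have b1: "v $ i \<le> DD v $ i + (L0 + 1) * v $ i" if "v \<in> stdsx" for v i
  proof -
    have nn: "\<forall>j. 0 \<le> v $ j" using that unfolding stdsx_def by blast
    have e: "(L0 + 1) * v $ i = L0 * v $ i + v $ i" by (simp add: distrib_right)
    show ?thesis using DD_lower[OF nn, of i] e by linarith
  qed
  obtain v s where v: "v \<in> stdsx" "DD v = s *\<^sub>R v"
    using pf[OF DD_cont b1] by blast
  have vpos: "\<forall>i. v $ i > 0"
  proof (rule ccontr)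
    assume "\<not> (\<forall>i. v $ i > 0)"
    then obtain k where "v $ k \<le> 0" by (auto simp: not_less)
    then have k: "v $ k = 0" using v(1) unfolding stdsx_def by (simp add: order_antisym)
    obtain j where "v $ j > 0" using stdsx_pos[OF v(1)] by blast
    have nn: "\<forall>i. 0 \<le> v $ i" using v(1) unfolding stdsx_def by simp
    have "DD v $ k > 0" by (rule dd_pos[OF nn k _ hD]) fact
    then show False using v(2) k by simp
  qed
  have "s \<le> 0"
  proof (rule ccontr)
    assume "\<not> s \<le> 0"
    then have "\<forall>i. DD v $ i > 0" using v(2) vpos by simp
    then show False using noPos[OF pe hD] by blast
  qed
  then have up: "\<forall>i. DD v $ i \<le> 0" using v(2) vpos by (simp add: mult_nonpos_nonneg less_imp_le)
  define G where "G x = - DD (- x)" for x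
  have Gc: "continuous_on UNIV G"
  proof -
    have m: "continuous_on UNIV (\<lambda>x::real^'n. - x)" by (rule continuous_on_minus[OF continuous_on_id])
    have "continuous_on UNIV (\<lambda>x. DD (- x))" by (rule continuous_on_compose2[OF DD_cont m]) simp
    from continuous_on_minus[OF this] show ?thesis unfolding G_def .
  qed
  have b2: "v $ i \<le> G v $ i + (L0 + 1) * v $ i" if "v \<in> stdsx" for v i
  proof -
    have "DD v $ i + DD (- v) $ i \<le> DD (v + - v) $ i" by (rule dd_superadd[OF hD hD hD])
    moreover have "DD (v + - v) = 0" using dd_unique[OF hD dd_zero] by simp
    ultimately have "DD v $ i \<le> G v $ i" unfolding G_def by simp
    moreover have nn: "\<forall>j. 0 \<le> v $ j" using that unfolding stdsx_def by blast
    moreover have e: "(L0 + 1) * v $ i = L0 * v $ i + v $ i" by (simp add: distrib_right)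
    ultimately show ?thesis using DD_lower[OF nn, of i] by linarith
  qed
  obtain y r where y: "y \<in> stdsx" "G y = r *\<^sub>R y"
    using pf[OF Gc b2] by blast
  have Gy: "DD (- y) $ i = - (r * y $ i)" for i
  proof -
    have "G y $ i = r * y $ i" using y(2) by simp
    then show ?thesis unfolding G_def by simp
  qed
  have ypos: "\<forall>i. y $ i > 0"
  proof (rule ccontr)
    assume "\<not> (\<forall>i. y $ i > 0)"
    then obtain k where "y $ k \<le> 0" by (auto simp: not_less)
    then have k: "y $ k = 0" using y(1) unfolding stdsx_def by (simp add: order_antisym)
    obtain j where j: "y $ j > 0" using stdsx_pos[OF y(1)] by blast
    have nn: "\<forall>i. (- y) $ i \<le> 0" using y(1) unfolding stdsx_def by simp
    have "DD (- y) $ k < 0" by (rule dd_neg[OF nn _ _ hD]) (use k j in simp_all)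
    then show False using Gy[of k] k by simp
  qed
  have "r \<ge> 0"
  proof (rule ccontr)
    assume "\<not> r \<ge> 0"
    then have "\<forall>i. DD (- y) $ i > 0" using ypos Gy by (simp add: mult_neg_pos)
    then show False using noPos[OF pe hD] by blast
  qed
  then have down: "\<forall>i. DD (- y) $ i \<le> 0" using ypos Gy by (simp add: less_imp_le)
  have ny: "\<forall>i. (- y) $ i < 0" using ypos by simp
  show ?thesis
    by (rule exI[of _ v], rule exI[of _ "- y"], rule exI[of _ "DD v"], rule exI[of _ "DD (- y)"])
       (intro conjI vpos ny up down hD)
qed

end

theorem lemma4:
  fixes u :: "real ^ 'n \<Rightarrow> real ^ 'n" and a :: "real ^ 'n"
  assumes "public_goods_utility u"
    and "\<forall>i. 0 < a $ i \<and> a $ i < 1"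
  shows "pareto_efficient u a \<longleftrightarrow>
    (\<exists>v_up v_down D_up D_down.
        (\<forall>i. v_up $ i > 0) \<and> (\<forall>i. v_down $ i < 0) \<and>
        has_dir_deriv u a v_up D_up \<and> (\<forall>i. D_up $ i \<le> 0) \<and>
        has_dir_deriv u a v_down D_down \<and> (\<forall>i. D_down $ i \<le> 0))"
proof -
  interpret pg u a using assms by unfold_locales
  show ?thesis
  proof
    assume "pareto_efficient u a"
    then show "\<exists>v_up v_down D_up D_down.
        (\<forall>i. v_up $ i > 0) \<and> (\<forall>i. v_down $ i < 0) \<and>
        has_dir_deriv u a v_up D_up \<and> (\<forall>i. D_up $ i \<le> 0) \<and>
        has_dir_deriv u a v_down D_down \<and> (\<forall>i. D_down $ i \<le> 0)" by (rule necessity)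
  next
    assume "\<exists>v_up v_down D_up D_down.
        (\<forall>i. v_up $ i > 0) \<and> (\<forall>i. v_down $ i < 0) \<and>
        has_dir_deriv u a v_up D_up \<and> (\<forall>i. D_up $ i \<le> 0) \<and>
        has_dir_deriv u a v_down D_down \<and> (\<forall>i. D_down $ i \<le> 0)"
    then obtain v_up v_down D_up D_down where
      h: "\<forall>i. v_up $ i > 0" "\<forall>i. v_down $ i < 0"
        "has_dir_deriv u a v_up D_up" "\<forall>i. D_up $ i \<le> 0"
        "has_dir_deriv u a v_down D_down" "\<forall>i. D_down $ i \<le> 0" by blast
    show "pareto_efficient u a" by (rule sufficiency[OF h(1,3,4) h(2,5,6)])
  qed
qed

end
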